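(* Consider multi-label chaining with the naive credal classifier (NCC), as described in the context, for the $j$-th label $Y_j$, where the previous labels $Y_1,\dots,Y_{j-1}$ have already been predicted and are partitioned into index sets $\mathscr{I}_{\mathcal{R}}^{j-1}$ (predicted relevant, value $1$), $\mathscr{I}_{\mathcal{I}}^{j-1}$ (predicted irrelevant, value $0$) and $\mathscr{I}_{\mathcal{A}}^{j-1}$ (abstained). Let the imprecise-branching bounds be $$\underline{P}^{IB}(Y_j=1)=\min_{\mathbf{y}\in\{0,1\}^{|\mathscr{I}_{\mathcal{A}}^{j-1}|}}\underline{P}(Y_j=1\mid \mathbf{X}=\mathbf{x},Y_{\mathscr{I}_{\mathcal{R}}^{j-1}}=1,Y_{\mathscr{I}_{\mathcal{I}}^{j-1}}=0,Y_{\mathscr{I}_{\mathcal{A}}^{j-1}}=\mathbf{y}),$$ $$\overline{P}^{IB}(Y_j=1)=\max_{\mathbf{y}\in\{0,1\}^{|\mathscr{I}_{\mathcal{A}}^{j-1}|}}\overline{P}(Y_j=1\mid \mathbf{X}=\mathbf{x},Y_{\mathscr{I}_{\mathcal{R}}^{j-1}}=1,Y_{\mathscr{I}_{\mathcal{I}}^{j-1}}=0,Y_{\mathscr{I}_{\mathcal{A}}^{j-1}}=\mathbf{y}),$$ with the conditional lower/upper probabilities given by the NCC formulas. Then the optimization defining $\underline{P}^{IB}(Y_j=1)$ reduces to $$\max_{\mathbf{y}\in\{0,1\}^{|\mathscr{I}_{\mathcal{A}}^{j-1}|}}\frac{\overline{P}_0(Y_{\mathscr{I}_{\mathcal{A}}^{j-1}}=\mathbf{y})}{\underline{P}_1(Y_{\mathscr{I}_{\mathcal{A}}^{j-1}}=\mathbf{y})},$$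 and that defining $\overline{P}^{IB}(Y_j=1)$ reduces to $$\min_{\mathbf{y}\in\{0,1\}^{|\mathscr{I}_{\mathcal{A}}^{j-1}|}}\frac{\underline{P}_0(Y_{\mathscr{I}_{\mathcal{A}}^{j-1}}=\mathbf{y})}{\overline{P}_1(Y_{\mathscr{I}_{\mathcal{A}}^{j-1}}=\mathbf{y})},$$ in the sense that a vector $\mathbf{y}$ attains the minimum (resp. maximum) in the imprecise-branching bound if and only if it attains the maximum (resp. minimum) of the corresponding ratio. Moreover, using the imprecise Dirichlet model estimates, the values of the abstained labels solving these problems are, respectively, $$\underline{\hat{\mathbf{y}}}_{\mathscr{I}_{\mathcal{A}}^{j-1}}\in\operatorname*{arg\,max}_{\mathbf{y}\in\{0,1\}^{|\mathscr{I}_{\mathcal{A}}^{j-1}|}}\prod_{i\in\mathscr{I}_{\mathcal{A}}^{j-1}}\frac{n(y_i\mid y_j=0)+s}{n(y_i\mid y_j=1)}\quad\text{and}\quad \overline{\hat{\mathbf{y}}}_{\mathscr{I}_{\mathcal{A}}^{j-1}}\in\operatorname*{arg\,min}_{\mathbf{y}\in\{0,1\}^{|\mathscr{I}_{\mathcal{A}}^{j-1}|}}\prod_{i\in\mathscr{I}_{\mathcal{A}}^{j-1}}\frac{n(y_i\mid y_j=0)}{n(y_i\mid y_j=1)+s},$$ where $\mathbf{y}=(y_i)_{i\in\mathscr{I}_{\mathcal{A}}^{j-1}}$ and the counts $n(y_i\mid y_j=1)$ are assumed always strictly positive.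
   Context: Multi-label setting: an instance $\mathbf{x}$ has $p$ discrete features $X_1,\dots,X_p$ and $m$ binary labels $Y_1,\dots,Y_m\in\{0,1\}$; training data consists of i.i.d. pairs $(\mathbf{x}_i,\mathbf{y}_i)$. In chaining, labels are inferred in order $Y_1,\dots,Y_m$; when inferring $Y_j$, each earlier label has a prediction in $\{0,1,*\}$ ($*$ = abstention); $\mathscr{I}_{\mathcal{R}}^{j-1},\mathscr{I}_{\mathcal{I}}^{j-1},\mathscr{I}_{\mathcal{A}}^{j-1}$ partition $\{1,\dots,j-1\}$ into the indices predicted $1$, predicted $0$, and abstained. Naive credal classifier (NCC) for $Y_j$, using the features $X_1,\dots,X_p$ and the previous labels $Y_1,\dots,Y_{j-1}$ as conditionally independent attributes given $Y_j$: the marginal $P(Y_j)$ is precise, and for any attribute $Z$ and value $z$, the imprecise Dirichlet model with hyper-parameter $s>0$ gives $\underline{P}(Z=z\mid Y_j=a)=\frac{n(z\mid a)}{n(a)+s}$, $\overline{P}(Z=z\mid Y_j=a)=\frac{n(z\mid a)+s}{n(a)+s}$, where $n(z\mid a)$ counts training instances with $Z=z$ and $Y_j=a$, and $n(a)$ counts those with $Y_j=a$. For $a\in\{0,1\}$ and an index set $\mathscr{I}$ with values $\mathbf{y}$, $\overline{P}_a(\mathbf{X}=\mathbf{x})=\prod_{i=1}^p\overline{P}(X_i=x_i\mid Y_j=a)$, $\overline{P}_a(Y_{\mathscr{I}}=\mathbf{y})=\prod_{k\in\mathscr{I}}\overline{P}(Y_k=y_k\mid Y_j=a)$, and analogously for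 lower probabilities $\underline{P}_a$. The conditional bounds are $$\underline{P}(Y_j=1\mid \mathbf{X}=\mathbf{x},Y_{\mathscr{I}^{j-1}}=\hat{\mathbf{y}})=\Big(1+\frac{P(Y_j=0)\overline{P}_0(\mathbf{X}=\mathbf{x})\overline{P}_0(Y_{\mathscr{I}^{j-1}}=\hat{\mathbf{y}})}{P(Y_j=1)\underline{P}_1(\mathbf{X}=\mathbf{x})\underline{P}_1(Y_{\mathscr{I}^{j-1}}=\hat{\mathbf{y}})}\Big)^{-1},$$ $$\overline{P}(Y_j=1\mid \mathbf{X}=\mathbf{x},Y_{\mathscr{I}^{j-1}}=\hat{\mathbf{y}})=\Big(1+\frac{P(Y_j=0)\underline{P}_0(\mathbf{X}=\mathbf{x})\underline{P}_0(Y_{\mathscr{I}^{j-1}}=\hat{\mathbf{y}})}{P(Y_j=1)\overline{P}_1(\mathbf{X}=\mathbf{x})\overline{P}_1(Y_{\mathscr{I}^{j-1}}=\hat{\mathbf{y}})}\Big)^{-1},$$ where $\mathscr{I}^{j-1}=\{1,\dots,j-1\}$ and $\hat{\mathbf{y}}$ is a full binary assignment of the previous labels. *)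

theory Defs
  imports Complex_Main
begin

text \<open>Training data: a list of pairs (x, y); features x i (i < p) take values in 'v,
  labels y k (1 \<le> k \<le> m) are binary (True = 1, False = 0).\<close>
type_synonym 'v data = "((nat \<Rightarrow> 'v) \<times> (nat \<Rightarrow> bool)) list"

definition n_cls :: "'v data \<Rightarrow> nat \<Rightarrow> bool \<Rightarrow> nat" where
  "n_cls D j a = length (filter (\<lambda>(x, y). y j = a) D)"

definition n_feat :: "'v data \<Rightarrow> nat \<Rightarrow> nat \<Rightarrow> 'v \<Rightarrow> bool \<Rightarrow> nat" where
  "n_feat D j i z a = length (filter (\<lambda>(x, y). x i = z \<and> y j = a) D)"

definition n_lab :: "'v data \<Rightarrow> nat \<Rightarrow> nat \<Rightarrow> bool \<Rightarrow> bool \<Rightarrow> nat" where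
  "n_lab D j k z a = length (filter (\<lambda>(x, y). y k = z \<and> y j = a) D)"

definition P_cls :: "'v data \<Rightarrow> nat \<Rightarrow> bool \<Rightarrow> real" where
  "P_cls D j a = real (n_cls D j a) / real (length D)"

definition lowP_feat :: "'v data \<Rightarrow> real \<Rightarrow> nat \<Rightarrow> nat \<Rightarrow> 'v \<Rightarrow> bool \<Rightarrow> real" where
  "lowP_feat D s j i z a = real (n_feat D j i z a) / (real (n_cls D j a) + s)"
definition upP_feat :: "'v data \<Rightarrow> real \<Rightarrow> nat \<Rightarrow> nat \<Rightarrow> 'v \<Rightarrow> bool \<Rightarrow> real" where
  "upP_feat D s j i z a = (real (n_feat D j i z a) + s) / (real (n_cls D j a) + s)"
definition lowP_lab :: "'v data \<Rightarrow> real \<Rightarrow> nat \<Rightarrow> nat \<Rightarrow> bool \<Rightarrow> bool \<Rightarrow> real" where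
  "lowP_lab D s j k z a = real (n_lab D j k z a) / (real (n_cls D j a) + s)"
definition upP_lab :: "'v data \<Rightarrow> real \<Rightarrow> nat \<Rightarrow> nat \<Rightarrow> bool \<Rightarrow> bool \<Rightarrow> real" where
  "upP_lab D s j k z a = (real (n_lab D j k z a) + s) / (real (n_cls D j a) + s)"

definition lowP_X :: "'v data \<Rightarrow> real \<Rightarrow> nat \<Rightarrow> nat \<Rightarrow> (nat \<Rightarrow> 'v) \<Rightarrow> bool \<Rightarrow> real" where
  "lowP_X D s j p x a = (\<Prod>i<p. lowP_feat D s j i (x i) a)"
definition upP_X :: "'v data \<Rightarrow> real \<Rightarrow> nat \<Rightarrow> nat \<Rightarrow> (nat \<Rightarrow> 'v) \<Rightarrow> bool \<Rightarrow> real" where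
  "upP_X D s j p x a = (\<Prod>i<p. upP_feat D s j i (x i) a)"

definition lowP_Y :: "'v data \<Rightarrow> real \<Rightarrow> nat \<Rightarrow> nat set \<Rightarrow> (nat \<Rightarrow> bool) \<Rightarrow> bool \<Rightarrow> real" where
  "lowP_Y D s j I yv a = (\<Prod>k\<in>I. lowP_lab D s j k (yv k) a)"
definition upP_Y :: "'v data \<Rightarrow> real \<Rightarrow> nat \<Rightarrow> nat set \<Rightarrow> (nat \<Rightarrow> bool) \<Rightarrow> bool \<Rightarrow> real" where
  "upP_Y D s j I yv a = (\<Prod>k\<in>I. upP_lab D s j k (yv k) a)"

definition lowP_cond :: "'v data \<Rightarrow> real \<Rightarrow> nat \<Rightarrow> nat \<Rightarrow> (nat \<Rightarrow> 'v) \<Rightarrow> (nat \<Rightarrow> bool) \<Rightarrow> real" where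
  "lowP_cond D s j p x yv = inverse (1 +
     (P_cls D j False * upP_X D s j p x False * upP_Y D s j {1..<j} yv False) /
     (P_cls D j True * lowP_X D s j p x True * lowP_Y D s j {1..<j} yv True))"
definition upP_cond :: "'v data \<Rightarrow> real \<Rightarrow> nat \<Rightarrow> nat \<Rightarrow> (nat \<Rightarrow> 'v) \<Rightarrow> (nat \<Rightarrow> bool) \<Rightarrow> real" where
  "upP_cond D s j p x yv = inverse (1 +
     (P_cls D j False * lowP_X D s j p x False * lowP_Y D s j {1..<j} yv False) /
     (P_cls D j True * upP_X D s j p x True * upP_Y D s j {1..<j} yv True))"

text \<open>Binary assignments to the indices in A (a copy of {0,1}^|A|, extensional: False outside A)\<close>
definition assign :: "nat set \<Rightarrow> (nat \<Rightarrow> bool) set" where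
  "assign A = {y. \<forall>k. k \<notin> A \<longrightarrow> y k = False}"

text \<open>Full assignment of previous labels: 1 on IR, 0 on II, y on IA\<close>
definition combine :: "nat set \<Rightarrow> nat set \<Rightarrow> (nat \<Rightarrow> bool) \<Rightarrow> nat \<Rightarrow> bool" where
  "combine IR IA y k = (if k \<in> IA then y k else k \<in> IR)"

definition lowP_IB :: "'v data \<Rightarrow> real \<Rightarrow> nat \<Rightarrow> nat \<Rightarrow> (nat \<Rightarrow> 'v) \<Rightarrow> nat set \<Rightarrow> nat set \<Rightarrow> real" where
  "lowP_IB D s j p x IR IA = Min ((\<lambda>y. lowP_cond D s j p x (combine IR IA y)) ` assign IA)"
definition upP_IB :: "'v data \<Rightarrow> real \<Rightarrow> nat \<Rightarrow> nat \<Rightarrow> (nat \<Rightarrow> 'v) \<Rightarrow> nat set \<Rightarrow> nat set \<Rightarrow> real" where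
  "upP_IB D s j p x IR IA = Max ((\<lambda>y. upP_cond D s j p x (combine IR IA y)) ` assign IA)"

end

theory Submission
  imports Defs
begin

lemma is_min: "finite S \<Longrightarrow> y \<in> S \<Longrightarrow> ((f::_\<Rightarrow>real) y = Min (f ` S)) \<longleftrightarrow> (\<forall>z\<in>S. f y \<le> f z)"
proof
  assume "finite S" "y \<in> S" "f y = Min (f ` S)"
  then show "\<forall>z\<in>S. f y \<le> f z" by (metis Min_le finite_imageI image_eqI)
next
  assume "finite S" "y \<in> S" "\<forall>z\<in>S. f y \<le> f z"
  then show "f y = Min (f ` S)" by (intro antisym) (auto intro: Min.boundedI Min_le)
qed
lemma is_max: "finite S \<Longrightarrow> y \<in> S \<Longrightarrow> ((f::_\<Rightarrow>real) y = Max (f ` S)) \<longleftrightarrow> (\<forall>z\<in>S. f z \<le> f y)"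
proof
  assume "finite S" "y \<in> S" "f y = Max (f ` S)"
  then show "\<forall>z\<in>S. f z \<le> f y" by (metis Max_ge finite_imageI image_eqI)
next
  assume "finite S" "y \<in> S" "\<forall>z\<in>S. f z \<le> f y"
  then show "f y = Max (f ` S)" by (intro antisym) (auto intro: Max.boundedI Max_ge)
qed

lemma inv_mono: "(C::real) > 0 \<Longrightarrow> a \<ge> 0 \<Longrightarrow> b \<ge> 0 \<Longrightarrow>
   inverse (1 + C*a) \<le> inverse (1 + C*b) \<longleftrightarrow> b \<le> a"
proof -
  assume h: "C > 0" "a \<ge> 0" "b \<ge> 0"
  have "C*a \<ge> 0" "C*b \<ge> 0" using h by simp_all
  then have "1 + C*a > 0" "1 + C*b > 0" by linarith+
  then have "inverse (1 + C*a) \<le> inverse (1 + C*b) \<longleftrightarrow> 1 + C*b \<le> 1 + C*a"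
    by (rule inverse_le_iff_le)
  also have "\<dots> \<longleftrightarrow> b \<le> a" using h by simp
  finally show ?thesis .
qed

lemma core_min:
  fixes f r q :: "_ \<Rightarrow> real"
  assumes "finite S" "y \<in> S" "C > 0" "K > 0"
    and "\<forall>z\<in>S. f z = inverse (1 + C * r z)" "\<forall>z\<in>S. r z \<ge> 0" "\<forall>z\<in>S. r z = K * q z"
  shows "(f y = Min (f ` S) \<longleftrightarrow> r y = Max (r ` S)) \<and> (f y = Min (f ` S) \<longleftrightarrow> q y = Max (q ` S))"
proof -
  have "(f y = Min (f ` S)) \<longleftrightarrow> (\<forall>z\<in>S. f y \<le> f z)" by (rule is_min[OF assms(1,2)])
  also have "\<dots> \<longleftrightarrow> (\<forall>z\<in>S. r z \<le> r y)"
  proof -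
    have "\<And>z. z \<in> S \<Longrightarrow> f y \<le> f z \<longleftrightarrow> r z \<le> r y"
    proof -
      fix z assume "z \<in> S"
      then have "f y \<le> f z \<longleftrightarrow> inverse (1 + C * r y) \<le> inverse (1 + C * r z)" using assms by simp
      also have "\<dots> \<longleftrightarrow> r z \<le> r y" using inv_mono[of C "r y" "r z"] assms \<open>z \<in> S\<close> by blast
      finally show "f y \<le> f z \<longleftrightarrow> r z \<le> r y" .
    qed
    then show ?thesis by blast
  qed
  finally have 1: "(f y = Min (f ` S)) \<longleftrightarrow> (\<forall>z\<in>S. r z \<le> r y)" .
  have 2: "r y = Max (r ` S) \<longleftrightarrow> (\<forall>z\<in>S. r z \<le> r y)" by (rule is_max[OF assms(1,2)])
  have 3: "q y = Max (q ` S) \<longleftrightarrow> (\<forall>z\<in>S. q z \<le> q y)" by (rule is_max[OF assms(1,2)])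
  have "(\<forall>z\<in>S. r z \<le> r y) \<longleftrightarrow> (\<forall>z\<in>S. q z \<le> q y)" using assms by (simp add: mult_le_cancel_left_pos)
  then show ?thesis using 1 2 3 by blast
qed

lemma core_max:
  fixes f r q :: "_ \<Rightarrow> real"
  assumes "finite S" "y \<in> S" "C > 0" "K > 0"
    and "\<forall>z\<in>S. f z = inverse (1 + C * r z)" "\<forall>z\<in>S. r z \<ge> 0" "\<forall>z\<in>S. r z = K * q z"
  shows "(f y = Max (f ` S) \<longleftrightarrow> r y = Min (r ` S)) \<and> (f y = Max (f ` S) \<longleftrightarrow> q y = Min (q ` S))"
proof -
  have "(f y = Max (f ` S)) \<longleftrightarrow> (\<forall>z\<in>S. f z \<le> f y)" by (rule is_max[OF assms(1,2)])
  also have "\<dots> \<longleftrightarrow> (\<forall>z\<in>S. r y \<le> r z)"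
  proof -
    have "\<And>z. z \<in> S \<Longrightarrow> f z \<le> f y \<longleftrightarrow> r y \<le> r z"
    proof -
      fix z assume "z \<in> S"
      then have "f z \<le> f y \<longleftrightarrow> inverse (1 + C * r z) \<le> inverse (1 + C * r y)" using assms by simp
      also have "\<dots> \<longleftrightarrow> r y \<le> r z" using inv_mono[of C "r z" "r y"] assms \<open>z \<in> S\<close> by blast
      finally show "f z \<le> f y \<longleftrightarrow> r y \<le> r z" .
    qed
    then show ?thesis by blast
  qed
  finally have 1: "(f y = Max (f ` S)) \<longleftrightarrow> (\<forall>z\<in>S. r y \<le> r z)" .
  have 2: "r y = Min (r ` S) \<longleftrightarrow> (\<forall>z\<in>S. r y \<le> r z)" by (rule is_min[OF assms(1,2)])
  have 3: "q y = Min (q ` S) \<longleftrightarrow> (\<forall>z\<in>S. q y \<le> q z)" by (rule is_min[OF assms(1,2)])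
  have "(\<forall>z\<in>S. r y \<le> r z) \<longleftrightarrow> (\<forall>z\<in>S. q y \<le> q z)" using assms by (simp add: mult_le_cancel_left_pos)
  then show ?thesis using 1 2 3 by blast
qed

lemma finite_assign: "finite A \<Longrightarrow> finite (assign A)"
proof -
  assume "finite A"
  have "assign A \<subseteq> (\<lambda>B k. k \<in> B) ` Pow A"
  proof
    fix y assume "y \<in> assign A"
    then have "y = (\<lambda>k. k \<in> {k\<in>A. y k})" unfolding assign_def by auto
    then show "y \<in> (\<lambda>B k. k \<in> B) ` Pow A" by blast
  qed
  then show ?thesis using \<open>finite A\<close> finite_subset by blast
qed

lemma n_lab_le: "n_lab D j k v a \<le> n_cls D j a"
  unfolding n_lab_def n_cls_def by (induction D) auto
lemma n_cls_le: "n_cls D j a \<le> length D"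
  unfolding n_cls_def by simp

lemma assign_empty: "assign {} = {\<lambda>_. False}"
  unfolding assign_def by auto


lemma frac_split: "(X::real)*(a*b)/(Y*(c*d)) = X*a/(Y*c)*(b/d)"
  by (simp add: divide_inverse mult_ac)

lemma ratio_factor: "(a::real)/b/(c/d) = d/b * (a/c)"
  by (simp add: divide_inverse mult_ac)

lemma prod_pos': "(\<forall>k\<in>A. (0::real) < f k) \<Longrightarrow> 0 < prod f A"
  by (simp add: prod_pos)
lemma prod_nonneg': "(\<forall>k\<in>A. (0::real) \<le> f k) \<Longrightarrow> 0 \<le> prod f A"
  by (simp add: prod_nonneg)

lemma split_low:
  assumes "R \<union> IA = {1..<j}" "R \<inter> IA = {}" "IR \<subseteq> R"
  shows "lowP_Y D s j {1..<j} (combine IR IA y) a = lowP_Y D s j R (\<lambda>k. k \<in> IR) a * lowP_Y D s j IA y a"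
proof -
  have fin: "finite R" "finite IA" using assms(1) by (metis finite_Un finite_atLeastLessThan)+
  have "lowP_Y D s j {1..<j} (combine IR IA y) a =
     (\<Prod>k\<in>R. lowP_lab D s j k (combine IR IA y k) a) * (\<Prod>k\<in>IA. lowP_lab D s j k (combine IR IA y k) a)"
    unfolding lowP_Y_def assms(1)[symmetric] by (rule prod.union_disjoint[OF fin assms(2)])
  also have "(\<Prod>k\<in>R. lowP_lab D s j k (combine IR IA y k) a) = lowP_Y D s j R (\<lambda>k. k \<in> IR) a"
    unfolding lowP_Y_def using assms(2) by (intro prod.cong) (auto simp: combine_def)
  also have "(\<Prod>k\<in>IA. lowP_lab D s j k (combine IR IA y k) a) = lowP_Y D s j IA y a"
    unfolding lowP_Y_def by (intro prod.cong) (auto simp: combine_def)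
  finally show ?thesis .
qed

lemma split_up:
  assumes "R \<union> IA = {1..<j}" "R \<inter> IA = {}" "IR \<subseteq> R"
  shows "upP_Y D s j {1..<j} (combine IR IA y) a = upP_Y D s j R (\<lambda>k. k \<in> IR) a * upP_Y D s j IA y a"
proof -
  have fin: "finite R" "finite IA" using assms(1) by (metis finite_Un finite_atLeastLessThan)+
  have "upP_Y D s j {1..<j} (combine IR IA y) a =
     (\<Prod>k\<in>R. upP_lab D s j k (combine IR IA y k) a) * (\<Prod>k\<in>IA. upP_lab D s j k (combine IR IA y k) a)"
    unfolding upP_Y_def assms(1)[symmetric] by (rule prod.union_disjoint[OF fin assms(2)])
  also have "(\<Prod>k\<in>R. upP_lab D s j k (combine IR IA y k) a) = upP_Y D s j R (\<lambda>k. k \<in> IR) a"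
    unfolding upP_Y_def using assms(2) by (intro prod.cong) (auto simp: combine_def)
  also have "(\<Prod>k\<in>IA. upP_lab D s j k (combine IR IA y k) a) = upP_Y D s j IA y a"
    unfolding upP_Y_def by (intro prod.cong) (auto simp: combine_def)
  finally show ?thesis .
qed

theorem proposition1:
  fixes D :: "'v data" and s :: real and p m j :: nat and x :: "nat \<Rightarrow> 'v"
    and IR II IA :: "nat set"
  assumes s_pos: "s > 0"
    and j_range: "1 \<le> j" "j \<le> m"
    and partition: "IR \<union> II \<union> IA = {1..<j}" "IR \<inter> II = {}" "IR \<inter> IA = {}" "II \<inter> IA = {}"
    and pos_lab1: "\<forall>k\<in>{1..<j}. \<forall>v. n_lab D j k v True > 0"
    and pos_feat: "\<forall>i<p. n_feat D j i (x i) True > 0 \<and> n_feat D j i (x i) False > 0"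
    and pos_obs0: "\<forall>k\<in>IR \<union> II. n_lab D j k (k \<in> IR) False > 0"
    and pos_cls0: "n_cls D j False > 0"
  shows
   "(\<forall>y\<in>assign IA.
       (lowP_cond D s j p x (combine IR IA y) = lowP_IB D s j p x IR IA
         \<longleftrightarrow> upP_Y D s j IA y False / lowP_Y D s j IA y True
             = Max ((\<lambda>z. upP_Y D s j IA z False / lowP_Y D s j IA z True) ` assign IA))
     \<and> (lowP_cond D s j p x (combine IR IA y) = lowP_IB D s j p x IR IA
         \<longleftrightarrow> (\<Prod>i\<in>IA. (real (n_lab D j i (y i) False) + s) / real (n_lab D j i (y i) True))
             = Max ((\<lambda>z. \<Prod>i\<in>IA. (real (n_lab D j i (z i) False) + s) / real (n_lab D j i (z i) True))
                      ` assign IA)))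
  \<and> (\<forall>y\<in>assign IA.
       (upP_cond D s j p x (combine IR IA y) = upP_IB D s j p x IR IA
         \<longleftrightarrow> lowP_Y D s j IA y False / upP_Y D s j IA y True
             = Min ((\<lambda>z. lowP_Y D s j IA z False / upP_Y D s j IA z True) ` assign IA))
     \<and> (upP_cond D s j p x (combine IR IA y) = upP_IB D s j p x IR IA
         \<longleftrightarrow> (\<Prod>i\<in>IA. real (n_lab D j i (y i) False) / (real (n_lab D j i (y i) True) + s))
             = Min ((\<lambda>z. \<Prod>i\<in>IA. real (n_lab D j i (z i) False) / (real (n_lab D j i (z i) True) + s))
                      ` assign IA)))"
proof (cases "IA = {}")
  case True
  then show ?thesis by (simp add: assign_empty lowP_IB_def upP_IB_def)
next
  case False
  then obtain k0 where k0: "k0 \<in> IA" by blast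
  define R where "R = IR \<union> II"
  have RIA: "R \<union> IA = {1..<j}" "R \<inter> IA = {}" "IR \<subseteq> R" using partition unfolding R_def by auto
  have finIA: "finite IA" using partition(1) by (metis finite_Un finite_atLeastLessThan)
  have finS: "finite (assign IA)" by (rule finite_assign[OF finIA])
  have IAsub: "IA \<subseteq> {1..<j}" "R \<subseteq> {1..<j}" using RIA by auto
  define N0 where "N0 = real (n_cls D j False)"
  define N1 where "N1 = real (n_cls D j True)"
  have "n_lab D j k0 True True > 0" using pos_lab1 IAsub k0 by blast
  then have "n_cls D j True > 0" using n_lab_le[of D j k0 True True] by linarith
  then have N1: "N1 > 0" unfolding N1_def by simp
  have N0: "N0 > 0" unfolding N0_def using pos_cls0 by simp
  have "length D > 0" using pos_cls0 n_cls_le[of D j False] by linarith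
  then have P0: "P_cls D j False > 0" and P1: "P_cls D j True > 0"
    unfolding P_cls_def using pos_cls0 \<open>n_cls D j True > 0\<close> by simp_all
  have N0s: "N0 + s > 0" and N1s: "N1 + s > 0" using N0 N1 s_pos by linarith+
  have nl1: "\<And>k v. k \<in> {1..<j} \<Longrightarrow> real (n_lab D j k v True) > 0" using pos_lab1 by simp
  have uX0: "upP_X D s j p x False > 0"
    unfolding upP_X_def upP_feat_def N0_def[symmetric] using N0s s_pos
    by (intro prod_pos') (auto intro!: divide_pos_pos add_nonneg_pos)
  have uX1: "upP_X D s j p x True > 0"
    unfolding upP_X_def upP_feat_def N1_def[symmetric] using N1s s_pos
    by (intro prod_pos') (auto intro!: divide_pos_pos add_nonneg_pos)
  have lX0: "lowP_X D s j p x False > 0"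
    unfolding lowP_X_def lowP_feat_def N0_def[symmetric] using N0s pos_feat
    by (intro prod_pos') (auto intro!: divide_pos_pos)
  have lX1: "lowP_X D s j p x True > 0"
    unfolding lowP_X_def lowP_feat_def N1_def[symmetric] using N1s pos_feat
    by (intro prod_pos') (auto intro!: divide_pos_pos)
  have U0: "\<And>A yv. upP_Y D s j A yv False > 0"
    unfolding upP_Y_def upP_lab_def N0_def[symmetric] using N0s s_pos
    by (intro prod_pos') (auto intro!: divide_pos_pos add_nonneg_pos)
  have U1: "\<And>A yv. upP_Y D s j A yv True > 0"
    unfolding upP_Y_def upP_lab_def N1_def[symmetric] using N1s s_pos
    by (intro prod_pos') (auto intro!: divide_pos_pos add_nonneg_pos)
  have L0: "\<And>A yv. lowP_Y D s j A yv False \<ge> 0"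
    unfolding lowP_Y_def lowP_lab_def N0_def[symmetric] using N0s
    by (intro prod_nonneg') auto
  have L1: "\<And>A yv. A \<subseteq> {1..<j} \<Longrightarrow> lowP_Y D s j A yv True > 0"
    unfolding lowP_Y_def lowP_lab_def N1_def[symmetric] using N1s nl1
    by (intro prod_pos') (auto intro!: divide_pos_pos)
  have L0R: "lowP_Y D s j R (\<lambda>k. k \<in> IR) False > 0"
    unfolding lowP_Y_def lowP_lab_def N0_def[symmetric] using N0s pos_obs0 unfolding R_def
    by (intro prod_pos') (auto intro!: divide_pos_pos)
  define C where "C = P_cls D j False * upP_X D s j p x False * upP_Y D s j R (\<lambda>k. k \<in> IR) False /
      (P_cls D j True * lowP_X D s j p x True * lowP_Y D s j R (\<lambda>k. k \<in> IR) True)"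
  define K where "K = (\<Prod>i\<in>IA. (N1 + s) / (N0 + s))"
  have C: "C > 0" unfolding C_def using P0 P1 uX0 lX1 U0 L1[OF IAsub(2)]
    by (intro divide_pos_pos mult_pos_pos) auto
  have K: "K > 0" unfolding K_def using N0s N1s by (intro prod_pos') auto
  have low_eq: "\<forall>z\<in>assign IA. lowP_cond D s j p x (combine IR IA z)
        = inverse (1 + C * (upP_Y D s j IA z False / lowP_Y D s j IA z True))"
    unfolding lowP_cond_def split_low[OF RIA] split_up[OF RIA] C_def by (simp add: frac_split)
  have low_r: "\<forall>z\<in>assign IA. upP_Y D s j IA z False / lowP_Y D s j IA z True \<ge> 0"
    using U0 L1[OF IAsub(1)] by (simp add: less_imp_le)
  have low_q: "\<forall>z\<in>assign IA. upP_Y D s j IA z False / lowP_Y D s j IA z True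
      = K * (\<Prod>i\<in>IA. (real (n_lab D j i (z i) False) + s) / real (n_lab D j i (z i) True))"
    unfolding upP_Y_def lowP_Y_def upP_lab_def lowP_lab_def K_def N0_def[symmetric] N1_def[symmetric]
    unfolding prod_dividef[symmetric] prod.distrib[symmetric] ratio_factor by (rule ballI, rule refl)
  define C' where "C' = P_cls D j False * lowP_X D s j p x False * lowP_Y D s j R (\<lambda>k. k \<in> IR) False /
      (P_cls D j True * upP_X D s j p x True * upP_Y D s j R (\<lambda>k. k \<in> IR) True)"
  have C': "C' > 0" unfolding C'_def using P0 P1 lX0 uX1 L0R U1
    by (intro divide_pos_pos mult_pos_pos) auto
  have up_eq: "\<forall>z\<in>assign IA. upP_cond D s j p x (combine IR IA z)
        = inverse (1 + C' * (lowP_Y D s j IA z False / upP_Y D s j IA z True))"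
    unfolding upP_cond_def split_low[OF RIA] split_up[OF RIA] C'_def by (simp add: frac_split)
  have up_r: "\<forall>z\<in>assign IA. lowP_Y D s j IA z False / upP_Y D s j IA z True \<ge> 0"
    using L0 U1 by (simp add: less_imp_le)
  have up_q: "\<forall>z\<in>assign IA. lowP_Y D s j IA z False / upP_Y D s j IA z True
      = K * (\<Prod>i\<in>IA. real (n_lab D j i (z i) False) / (real (n_lab D j i (z i) True) + s))"
    unfolding upP_Y_def lowP_Y_def upP_lab_def lowP_lab_def K_def N0_def[symmetric] N1_def[symmetric]
    unfolding prod_dividef[symmetric] prod.distrib[symmetric] ratio_factor by (rule ballI, rule refl)
  show ?thesis
  proof (rule conjI[OF ballI ballI])
    fix y assume y: "y \<in> assign IA"
    show "(lowP_cond D s j p x (combine IR IA y) = lowP_IB D s j p x IR IA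
         \<longleftrightarrow> upP_Y D s j IA y False / lowP_Y D s j IA y True
             = Max ((\<lambda>z. upP_Y D s j IA z False / lowP_Y D s j IA z True) ` assign IA))
     \<and> (lowP_cond D s j p x (combine IR IA y) = lowP_IB D s j p x IR IA
         \<longleftrightarrow> (\<Prod>i\<in>IA. (real (n_lab D j i (y i) False) + s) / real (n_lab D j i (y i) True))
             = Max ((\<lambda>z. \<Prod>i\<in>IA. (real (n_lab D j i (z i) False) + s) / real (n_lab D j i (z i) True))
                      ` assign IA))"
      unfolding lowP_IB_def
      by (rule core_min[where f="\<lambda>z. lowP_cond D s j p x (combine IR IA z)" and r="\<lambda>z. upP_Y D s j IA z False / lowP_Y D s j IA z True" and q="\<lambda>z. \<Prod>i\<in>IA. (real (n_lab D j i (z i) False) + s) / real (n_lab D j i (z i) True)", OF finS y C K low_eq low_r low_q])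
  next
    fix y assume y: "y \<in> assign IA"
    show "(upP_cond D s j p x (combine IR IA y) = upP_IB D s j p x IR IA
         \<longleftrightarrow> lowP_Y D s j IA y False / upP_Y D s j IA y True
             = Min ((\<lambda>z. lowP_Y D s j IA z False / upP_Y D s j IA z True) ` assign IA))
     \<and> (upP_cond D s j p x (combine IR IA y) = upP_IB D s j p x IR IA
         \<longleftrightarrow> (\<Prod>i\<in>IA. real (n_lab D j i (y i) False) / (real (n_lab D j i (y i) True) + s))
             = Min ((\<lambda>z. \<Prod>i\<in>IA. real (n_lab D j i (z i) False) / (real (n_lab D j i (z i) True) + s))
                      ` assign IA))"
      unfolding upP_IB_def
      by (rule core_max[where f="\<lambda>z. upP_cond D s j p x (combine IR IA z)" and r="\<lambda>z. lowP_Y D s j IA z False / upP_Y D s j IA z True" and q="\<lambda>z. \<Prod>i\<in>IA. real (n_lab D j i (z i) False) / (real (n_lab D j i (z i) True) + s)", OF finS y C' K up_eq up_r up_q])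
  qed
qed

end
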